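(* Let $(\vdash,\overline{\cdot},\widehat{\cdot})$ be a setting satisfying Pre-Relevance, let $\mathcal{S},\mathcal{S}'\subseteq\mathcal{L}$ with $\mathcal{S}\mid\mathcal{S}'$, let $\mathcal{E}$ be a complete extension of $\mathcal{AF}_{\vdash}(\mathcal{S}\cup\mathcal{S}')$, $\mathcal{E}_1=\mathcal{E}\cap\mathit{Arg}_{\vdash}(\mathcal{S})$ and $\mathcal{E}_2=\mathcal{E}\cap\mathit{Arg}_{\vdash}(\mathcal{S}')$. Then (1) $\mathcal{E}=\mathsf{Defended}(\mathcal{E}_1\cup\mathcal{E}_2,\mathcal{AF}_{\vdash}(\mathcal{S}\cup\mathcal{S}'))$, and (2) $\mathcal{E}_1$ is a complete extension of $\mathcal{AF}_{\vdash}(\mathcal{S})$.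
   Context: $\mathcal{L}$ is the set of formulas of a language built from propositional atoms; $\mathsf{Atoms}(\mathcal{S})$ is the set of atoms occurring in $\mathcal{S}$, and $\mathcal{S}_1\mid\mathcal{S}_2$ means $\mathsf{Atoms}(\mathcal{S}_1)\cap\mathsf{Atoms}(\mathcal{S}_2)=\emptyset$. A setting is $(\vdash,\overline{\cdot},\widehat{\cdot})$ with ${\vdash}\subseteq\wp_{\sf fin}(\mathcal{L})\times\mathcal{L}$ arbitrary, $\overline{\cdot}:\mathcal{L}\to\wp(\mathcal{L})$, $\widehat{\cdot}$ assigning to each nonempty finite set a finite set of formulas, with $\widehat{\emptyset}=\emptyset$. $\mathit{Arg}_{\vdash}(\mathcal{S})=\{(\Gamma,\gamma):\Gamma\subseteq\mathcal{S}\text{ finite},\Gamma\vdash\gamma\}$; $\mathcal{AF}_{\vdash}(\mathcal{S})$ is the attack graph on it where $(\Gamma,\gamma)$ attacks $(\Gamma',\gamma')$ iff $\gamma\in\overline{\phi}$ for some $\phi\in\widehat{\Gamma'}$. $\mathcal{A}$ defends $a$ iff every attacker of $a$ in the framework is attacked by a member of $\mathcal{A}$; $\mathsf{Defended}(\mathcal{A},\mathcal{AF}_{\vdash}(\mathcal{S}))$ is the set of arguments of $\mathit{Arg}_{\vdash}(\mathcal{S})$ defended by $\mathcal{A}$. Complete = conflict-free, defends all its members, and contains every argument it defends. Pre-Relevance of the setting: (a) for all $\mathcal{S}_1,\mathcal{S}_2,\phi$ with $\mathcal{S}_1\cup\{\phi\}\mid\mathcal{S}_2$, $\mathcal{S}_1\cup\mathcal{S}_2\vdash\phi$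 implies $\mathcal{S}_1'\vdash\phi$ for some $\mathcal{S}_1'\subseteq\mathcal{S}_1$; (b) primeness: for all sets of atoms $\mathcal{A}_1\mid\mathcal{A}_2$, all finite $\mathcal{S}_1,\mathcal{T}_1,\mathcal{S}_2,\mathcal{T}_2$ with $\mathsf{Atoms}(\mathcal{S}_i),\mathsf{Atoms}(\mathcal{T}_i)\subseteq\mathcal{A}_i$, and all $\phi,\psi$ with $\psi\in\overline{\phi}$, $\phi\in\widehat{\mathcal{T}_1\cup\mathcal{T}_2}$: if $\mathcal{S}_1\cup\mathcal{S}_2\vdash\psi$ then there are $i\in\{1,2\}$, $\mathcal{S}_i'\subseteq\mathcal{S}_i$, $\phi_i\in\widehat{\mathcal{T}_i}$, $\psi_i\in\overline{\phi_i}$ with $\mathcal{S}_i'\vdash\psi_i$; (c) $\widehat{\Delta}\subseteq\widehat{\Delta\cup\Delta'}$ for all finite $\Delta,\Delta'$. *)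

theory Defs
  imports Main
begin

definition Atoms :: "('f \<Rightarrow> 'a set) \<Rightarrow> 'f set \<Rightarrow> 'a set" where
  "Atoms atoms S = (\<Union>\<phi>\<in>S. atoms \<phi>)"

definition disjoint_atoms :: "('f \<Rightarrow> 'a set) \<Rightarrow> 'f set \<Rightarrow> 'f set \<Rightarrow> bool" where
  "disjoint_atoms atoms S1 S2 \<longleftrightarrow> Atoms atoms S1 \<inter> Atoms atoms S2 = {}"

definition setting :: "('f set \<Rightarrow> 'f \<Rightarrow> bool) \<Rightarrow> ('f \<Rightarrow> 'f set) \<Rightarrow> ('f set \<Rightarrow> 'f set) \<Rightarrow> bool" where
  "setting vdash contr hat \<longleftrightarrow>
     (\<forall>\<Gamma> \<gamma>. vdash \<Gamma> \<gamma> \<longrightarrow> finite \<Gamma>) \<and>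
     (\<forall>\<Delta>. finite \<Delta> \<longrightarrow> finite (hat \<Delta>)) \<and>
     hat {} = {}"

definition Arg :: "('f set \<Rightarrow> 'f \<Rightarrow> bool) \<Rightarrow> 'f set \<Rightarrow> ('f set \<times> 'f) set" where
  "Arg vdash S = {(\<Gamma>, \<gamma>). \<Gamma> \<subseteq> S \<and> finite \<Gamma> \<and> vdash \<Gamma> \<gamma>}"

definition attacks :: "('f \<Rightarrow> 'f set) \<Rightarrow> ('f set \<Rightarrow> 'f set) \<Rightarrow> ('f set \<times> 'f) \<Rightarrow> ('f set \<times> 'f) \<Rightarrow> bool" where
  "attacks contr hat a b \<longleftrightarrow> (\<exists>\<phi>\<in>hat (fst b). snd a \<in> contr \<phi>)"

definition Defended :: "('f set \<Rightarrow> 'f \<Rightarrow> bool) \<Rightarrow> ('f \<Rightarrow> 'f set) \<Rightarrow> ('f set \<Rightarrow> 'f set)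
    \<Rightarrow> ('f set \<times> 'f) set \<Rightarrow> 'f set \<Rightarrow> ('f set \<times> 'f) set" where
  "Defended vdash contr hat A S =
     {a \<in> Arg vdash S. \<forall>b \<in> Arg vdash S. attacks contr hat b a \<longrightarrow> (\<exists>c\<in>A. attacks contr hat c b)}"

definition conflict_free :: "('f \<Rightarrow> 'f set) \<Rightarrow> ('f set \<Rightarrow> 'f set) \<Rightarrow> ('f set \<times> 'f) set \<Rightarrow> bool" where
  "conflict_free contr hat E \<longleftrightarrow> (\<forall>a\<in>E. \<forall>b\<in>E. \<not> attacks contr hat a b)"

definition complete_ext :: "('f set \<Rightarrow> 'f \<Rightarrow> bool) \<Rightarrow> ('f \<Rightarrow> 'f set) \<Rightarrow> ('f set \<Rightarrow> 'f set)
    \<Rightarrow> 'f set \<Rightarrow> ('f set \<times> 'f) set \<Rightarrow> bool" where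
  "complete_ext vdash contr hat S E \<longleftrightarrow>
     E \<subseteq> Arg vdash S \<and> conflict_free contr hat E \<and>
     E \<subseteq> Defended vdash contr hat E S \<and>
     Defended vdash contr hat E S \<subseteq> E"

definition pre_relevance :: "('f \<Rightarrow> 'a set) \<Rightarrow> ('f set \<Rightarrow> 'f \<Rightarrow> bool) \<Rightarrow> ('f \<Rightarrow> 'f set)
    \<Rightarrow> ('f set \<Rightarrow> 'f set) \<Rightarrow> bool" where
  "pre_relevance atoms vdash contr hat \<longleftrightarrow>
     (\<forall>S1 S2 \<phi>. disjoint_atoms atoms (S1 \<union> {\<phi>}) S2 \<longrightarrow> vdash (S1 \<union> S2) \<phi> \<longrightarrow>
        (\<exists>S1'. S1' \<subseteq> S1 \<and> vdash S1' \<phi>)) \<and>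
     (\<forall>A1 A2 S1 T1 S2 T2 \<phi> \<psi>.
        A1 \<inter> A2 = {} \<longrightarrow>
        finite S1 \<longrightarrow> finite T1 \<longrightarrow> finite S2 \<longrightarrow> finite T2 \<longrightarrow>
        Atoms atoms S1 \<subseteq> A1 \<longrightarrow> Atoms atoms T1 \<subseteq> A1 \<longrightarrow>
        Atoms atoms S2 \<subseteq> A2 \<longrightarrow> Atoms atoms T2 \<subseteq> A2 \<longrightarrow>
        \<psi> \<in> contr \<phi> \<longrightarrow> \<phi> \<in> hat (T1 \<union> T2) \<longrightarrow> vdash (S1 \<union> S2) \<psi> \<longrightarrow>
        ((\<exists>S1' \<phi>1 \<psi>1. S1' \<subseteq> S1 \<and> \<phi>1 \<in> hat T1 \<and> \<psi>1 \<in> contr \<phi>1 \<and> vdash S1' \<psi>1) \<or>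
         (\<exists>S2' \<phi>2 \<psi>2. S2' \<subseteq> S2 \<and> \<phi>2 \<in> hat T2 \<and> \<psi>2 \<in> contr \<phi>2 \<and> vdash S2' \<psi>2))) \<and>
     (\<forall>\<Delta> \<Delta>'. finite \<Delta> \<longrightarrow> finite \<Delta>' \<longrightarrow> hat \<Delta> \<subseteq> hat (\<Delta> \<union> \<Delta>'))"

end

theory Submission
  imports Defs
begin

lemma atoms_mono: "A \<subseteq> B \<Longrightarrow> Atoms atoms A \<subseteq> Atoms atoms B"
  unfolding Atoms_def by blast

lemma prime_use:
  assumes pr: "pre_relevance atoms vdash contr hat"
    and dj: "disjoint_atoms atoms S S'"
    and fG: "finite G" and GS: "G \<subseteq> S \<union> S'"
    and f1: "finite T1" and f2: "finite T2" and T1S: "T1 \<subseteq> S" and T2S: "T2 \<subseteq> S'"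
    and psi: "\<psi> \<in> contr \<phi>" and phi: "\<phi> \<in> hat (T1 \<union> T2)" and vd: "vdash G \<psi>"
  shows "(\<exists>G' \<phi>1 \<psi>1. G' \<subseteq> G \<inter> S \<and> \<phi>1 \<in> hat T1 \<and> \<psi>1 \<in> contr \<phi>1 \<and> vdash G' \<psi>1) \<or>
         (\<exists>G' \<phi>2 \<psi>2. G' \<subseteq> G \<inter> S' \<and> \<phi>2 \<in> hat T2 \<and> \<psi>2 \<in> contr \<phi>2 \<and> vdash G' \<psi>2)"
proof -
  note P = conjunct1[OF conjunct2[OF pr[unfolded pre_relevance_def]]]
  have GG: "G \<inter> S \<union> G \<inter> S' = G" using GS by blast
  have a1: "Atoms atoms (G \<inter> S) \<subseteq> Atoms atoms S" by (rule atoms_mono) blast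
  have a2: "Atoms atoms T1 \<subseteq> Atoms atoms S" by (rule atoms_mono[OF T1S])
  have a3: "Atoms atoms (G \<inter> S') \<subseteq> Atoms atoms S'" by (rule atoms_mono) blast
  have a4: "Atoms atoms T2 \<subseteq> Atoms atoms S'" by (rule atoms_mono[OF T2S])
  have dA: "Atoms atoms S \<inter> Atoms atoms S' = {}" using dj unfolding disjoint_atoms_def .
  have fa: "finite (G \<inter> S)" and fb: "finite (G \<inter> S')" using fG by auto
  have vd': "vdash (G \<inter> S \<union> G \<inter> S') \<psi>" using GG vd by simp
  show ?thesis
    by (rule P[rule_format, OF dA fa f1 fb f2 a1 a2 a3 a4 psi phi vd'])
qed

lemma hat_mono:
  assumes pr: "pre_relevance atoms vdash contr hat" and "finite A" "finite B" "A \<subseteq> B"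
  shows "hat A \<subseteq> hat B"
proof -
  note M = conjunct2[OF conjunct2[OF pr[unfolded pre_relevance_def]]]
  have "hat A \<subseteq> hat (A \<union> B)" using M assms(2,3) by blast
  thus ?thesis using assms(4) by (simp add: sup_absorb2)
qed

lemma key:
  assumes st: "setting vdash contr hat"
    and pr: "pre_relevance atoms vdash contr hat"
    and dj: "disjoint_atoms atoms S S'"
    and ce: "complete_ext vdash contr hat (S \<union> S') E"
    and cE: "c \<in> E" and bA: "b \<in> Arg vdash (S \<union> S')" and att: "attacks contr hat c b"
    and T: "fst b = T1 \<union> T2" "T1 \<subseteq> S" "T2 \<subseteq> S'"
  shows "\<exists>c'\<in>E. (c' \<in> Arg vdash S \<and> (\<exists>\<phi>\<in>hat T1. snd c' \<in> contr \<phi>)) \<or>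
                (c' \<in> Arg vdash S' \<and> (\<exists>\<phi>\<in>hat T2. snd c' \<in> contr \<phi>))"
proof -
  obtain G \<gamma> where c: "c = (G, \<gamma>)" by (cases c)
  obtain D \<delta> where b: "b = (D, \<delta>)" by (cases b)
  have EA: "E \<subseteq> Arg vdash (S \<union> S')" and ED: "E \<subseteq> Defended vdash contr hat E (S \<union> S')"
    and DE: "Defended vdash contr hat E (S \<union> S') \<subseteq> E"
    using ce unfolding complete_ext_def by auto
  have cA: "c \<in> Arg vdash (S \<union> S')" using cE EA by blast
  hence fG: "finite G" and GS: "G \<subseteq> S \<union> S'" and vG: "vdash G \<gamma>" using c by (auto simp: Arg_def)
  have fD: "finite D" and DS: "D \<subseteq> S \<union> S'" using bA b by (auto simp: Arg_def)
  obtain \<phi> where phi: "\<phi> \<in> hat D" and gam: "\<gamma> \<in> contr \<phi>" using att b c by (auto simp: attacks_def)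
  have DD: "T1 \<union> T2 = D" using T b by simp
  have gen: "c' \<in> E" if G': "G' \<subseteq> G" and v': "vdash G' \<psi>'" and c': "c' = (G', \<psi>')" for G' \<psi>' c'
  proof -
    have fG': "finite G'" using G' fG finite_subset by blast
    have c'A: "c' \<in> Arg vdash (S \<union> S')" using c' G' GS fG' v' by (auto simp: Arg_def)
    have "hat G' \<subseteq> hat G" using hat_mono[OF pr fG' fG G'] .
    have "\<exists>e\<in>E. attacks contr hat e d" if dA: "d \<in> Arg vdash (S \<union> S')" and da: "attacks contr hat d c'" for d
    proof -
      have "attacks contr hat d c" using da c c' \<open>hat G' \<subseteq> hat G\<close> by (auto simp: attacks_def)
      thus ?thesis using cE ED dA unfolding Defended_def by blast
    qed
    hence "c' \<in> Defended vdash contr hat E (S \<union> S')" using c'A unfolding Defended_def by blast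
    thus ?thesis using DE by blast
  qed
  have "(\<exists>G' \<phi>1 \<psi>1. G' \<subseteq> G \<inter> S \<and> \<phi>1 \<in> hat (T1) \<and> \<psi>1 \<in> contr \<phi>1 \<and> vdash G' \<psi>1) \<or>
         (\<exists>G' \<phi>2 \<psi>2. G' \<subseteq> G \<inter> S' \<and> \<phi>2 \<in> hat (T2) \<and> \<psi>2 \<in> contr \<phi>2 \<and> vdash G' \<psi>2)"
    using prime_use[OF pr dj fG GS _ _ T(2,3) gam _ vG] fD phi DD by (metis finite_Un)
  thus ?thesis
  proof
    assume "\<exists>G' \<phi>1 \<psi>1. G' \<subseteq> G \<inter> S \<and> \<phi>1 \<in> hat (T1) \<and> \<psi>1 \<in> contr \<phi>1 \<and> vdash G' \<psi>1"
    then obtain G' \<phi>1 \<psi>1 where h: "G' \<subseteq> G \<inter> S" "\<phi>1 \<in> hat (T1)" "\<psi>1 \<in> contr \<phi>1" "vdash G' \<psi>1" by blast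
    have "(G', \<psi>1) \<in> E" using gen[of G' \<psi>1] h by blast
    moreover have "(G', \<psi>1) \<in> Arg vdash S" using h fG finite_subset[of G' G] by (auto simp: Arg_def)
    ultimately show ?thesis using h by (intro bexI[of _ "(G', \<psi>1)"]) auto
  next
    assume "\<exists>G' \<phi>1 \<psi>1. G' \<subseteq> G \<inter> S' \<and> \<phi>1 \<in> hat (T2) \<and> \<psi>1 \<in> contr \<phi>1 \<and> vdash G' \<psi>1"
    then obtain G' \<phi>1 \<psi>1 where h: "G' \<subseteq> G \<inter> S'" "\<phi>1 \<in> hat (T2)" "\<psi>1 \<in> contr \<phi>1" "vdash G' \<psi>1" by blast
    have "(G', \<psi>1) \<in> E" using gen[of G' \<psi>1] h by blast
    moreover have "(G', \<psi>1) \<in> Arg vdash S'" using h fG finite_subset[of G' G] by (auto simp: Arg_def)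
    ultimately show ?thesis using h by (intro bexI[of _ "(G', \<psi>1)"]) auto
  qed
qed

theorem lemma5:
  fixes atoms :: "'f \<Rightarrow> 'a set"
    and vdash :: "'f set \<Rightarrow> 'f \<Rightarrow> bool"
    and contr :: "'f \<Rightarrow> 'f set"
    and hat :: "'f set \<Rightarrow> 'f set"
    and S S' :: "'f set"
    and E :: "('f set \<times> 'f) set"
  assumes "setting vdash contr hat"
    and "pre_relevance atoms vdash contr hat"
    and "disjoint_atoms atoms S S'"
    and "complete_ext vdash contr hat (S \<union> S') E"
  shows "E = Defended vdash contr hat ((E \<inter> Arg vdash S) \<union> (E \<inter> Arg vdash S')) (S \<union> S') \<and>
         complete_ext vdash contr hat S (E \<inter> Arg vdash S)"
proof -
  note st = assms(1) and pr = assms(2) and dj = assms(3) and ce = assms(4)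
  have EA: "E \<subseteq> Arg vdash (S \<union> S')" and ED: "E \<subseteq> Defended vdash contr hat E (S \<union> S')"
    and DE: "Defended vdash contr hat E (S \<union> S') \<subseteq> E" and cf: "conflict_free contr hat E"
    using ce unfolding complete_ext_def by auto
  have hat0: "hat {} = {}" using st unfolding setting_def by blast
  have ArgS: "Arg vdash S \<subseteq> Arg vdash (S \<union> S')" "Arg vdash S' \<subseteq> Arg vdash (S \<union> S')"
    unfolding Arg_def by auto
  have lift: "attacks contr hat c' b"
    if "b \<in> Arg vdash (S \<union> S')" "\<phi> \<in> hat (fst b \<inter> X)" "snd c' \<in> contr \<phi>" for c' b \<phi> X
  proof -
    have "finite (fst b)" using that(1) by (auto simp: Arg_def)
    hence "hat (fst b \<inter> X) \<subseteq> hat (fst b)" using hat_mono[OF pr] by auto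
    thus ?thesis using that unfolding attacks_def by blast
  qed
  have part1: "E = Defended vdash contr hat ((E \<inter> Arg vdash S) \<union> (E \<inter> Arg vdash S')) (S \<union> S')"
  proof
    show "E \<subseteq> Defended vdash contr hat ((E \<inter> Arg vdash S) \<union> (E \<inter> Arg vdash S')) (S \<union> S')"
    proof
      fix a assume aE: "a \<in> E"
      have "\<exists>c\<in>(E \<inter> Arg vdash S) \<union> (E \<inter> Arg vdash S'). attacks contr hat c b"
        if bA: "b \<in> Arg vdash (S \<union> S')" and ba: "attacks contr hat b a" for b
      proof -
        obtain c where cE: "c \<in> E" and cb: "attacks contr hat c b"
          using aE ED bA ba unfolding Defended_def by blast
        have "fst b = (fst b \<inter> S) \<union> (fst b \<inter> S')" using bA by (auto simp: Arg_def)
        from key[OF st pr dj ce cE bA cb this] obtain c' \<phi> where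
          "c' \<in> E" "(c' \<in> Arg vdash S \<and> \<phi> \<in> hat (fst b \<inter> S)) \<or> (c' \<in> Arg vdash S' \<and> \<phi> \<in> hat (fst b \<inter> S'))"
          "snd c' \<in> contr \<phi>" by blast
        thus ?thesis using lift[OF bA] by blast
      qed
      thus "a \<in> Defended vdash contr hat ((E \<inter> Arg vdash S) \<union> (E \<inter> Arg vdash S')) (S \<union> S')"
        using aE EA unfolding Defended_def by blast
    qed
  next
    show "Defended vdash contr hat ((E \<inter> Arg vdash S) \<union> (E \<inter> Arg vdash S')) (S \<union> S') \<subseteq> E"
      using DE unfolding Defended_def by blast
  qed
  have c1: "E \<inter> Arg vdash S \<subseteq> Defended vdash contr hat (E \<inter> Arg vdash S) S"
  proof
    fix a assume aE: "a \<in> E \<inter> Arg vdash S"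
    have "\<exists>c\<in>E \<inter> Arg vdash S. attacks contr hat c b"
      if bA0: "b \<in> Arg vdash S" and ba: "attacks contr hat b a" for b
    proof -
      have bA: "b \<in> Arg vdash (S \<union> S')" using bA0 ArgS by blast
      obtain c where cE: "c \<in> E" and cb: "attacks contr hat c b"
        using aE ED bA ba unfolding Defended_def by blast
      have "fst b \<subseteq> S" using bA0 by (auto simp: Arg_def)
      from key[OF st pr dj ce cE bA cb, of "fst b" "{}"] this hat0
      obtain c' where "c' \<in> E" "c' \<in> Arg vdash S" "\<exists>\<phi>\<in>hat (fst b). snd c' \<in> contr \<phi>" by auto
      thus ?thesis unfolding attacks_def by blast
    qed
    thus "a \<in> Defended vdash contr hat (E \<inter> Arg vdash S) S"
      using aE unfolding Defended_def by blast
  qed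
  have c2: "Defended vdash contr hat (E \<inter> Arg vdash S) S \<subseteq> E \<inter> Arg vdash S"
  proof
    fix a assume aD: "a \<in> Defended vdash contr hat (E \<inter> Arg vdash S) S"
    have aS: "a \<in> Arg vdash S" using aD unfolding Defended_def by blast
    have "\<exists>c\<in>E. attacks contr hat c b"
      if bA: "b \<in> Arg vdash (S \<union> S')" and ba: "attacks contr hat b a" for b
    proof -
      obtain D \<delta> where b: "b = (D, \<delta>)" by (cases b)
      have fD: "finite D" and DS: "D \<subseteq> S \<union> S'" and vD: "vdash D \<delta>" using bA b by (auto simp: Arg_def)
      obtain \<phi> where phi: "\<phi> \<in> hat (fst a)" and del: "\<delta> \<in> contr \<phi>"
        using ba b by (auto simp: attacks_def)
      have fa: "finite (fst a)" "fst a \<subseteq> S" using aS by (auto simp: Arg_def)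
      from prime_use[OF pr dj fD DS fa(1) _ fa(2) _ del _ vD, of "{}"] phi hat0
      obtain D' \<phi>1 \<psi>1 where h: "D' \<subseteq> D \<inter> S" "\<phi>1 \<in> hat (fst a)" "\<psi>1 \<in> contr \<phi>1" "vdash D' \<psi>1"
        by auto
      have fD': "finite D'" using h(1) fD finite_subset by blast
      have b'A: "(D', \<psi>1) \<in> Arg vdash S" using h fD' by (auto simp: Arg_def)
      have "attacks contr hat (D', \<psi>1) a" using h unfolding attacks_def by auto
      then obtain c where cE: "c \<in> E \<inter> Arg vdash S" and cb: "attacks contr hat c (D', \<psi>1)"
        using aD b'A unfolding Defended_def by blast
      have "hat D' \<subseteq> hat D" using hat_mono[OF pr fD' fD] h(1) by blast
      hence "attacks contr hat c b" using cb b unfolding attacks_def by auto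
      thus ?thesis using cE by blast
    qed
    hence "a \<in> Defended vdash contr hat E (S \<union> S')"
      using aS ArgS unfolding Defended_def by blast
    thus "a \<in> E \<inter> Arg vdash S" using DE aS by blast
  qed
  have "conflict_free contr hat (E \<inter> Arg vdash S)" using cf unfolding conflict_free_def by blast
  moreover have "E \<inter> Arg vdash S \<subseteq> Arg vdash S" by blast
  ultimately have "complete_ext vdash contr hat S (E \<inter> Arg vdash S)"
    unfolding complete_ext_def using c1 c2 by (intro conjI) assumption+
  with part1 show ?thesis by (rule conjI)
qed

end
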